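(* Let $r\ge5$ and let $C$ be a graph on $r+1$ vertices that has no vertex cover of size $1$. Let $c_3$ be the number of $3$-element vertex subsets of $C$ that are vertex covers. If \[ 4r-16+\frac{36}{r+2}\le c_3<4r-8, \] then $C$ is the disjoint union of a $K_3$ with isolated vertices, or the disjoint union of a $P_4$ (path on $4$ vertices) with isolated vertices.
   Context: A vertex cover of a graph is a set of vertices meeting every edge. *)

theory Defs
  imports Complex_Main
begin

definition simple_graph :: "'a set \<Rightarrow> 'a set set \<Rightarrow> bool" where
  "simple_graph V E \<longleftrightarrow> finite V \<and> (\<forall>e\<in>E. e \<subseteq> V \<and> card e = 2)"

definition vertex_cover :: "'a set \<Rightarrow> 'a set set \<Rightarrow> 'a set \<Rightarrow> bool" where
  "vertex_cover V E S \<longleftrightarrow> S \<subseteq> V \<and> (\<forall>e\<in>E. S \<inter> e \<noteq> {})"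

definition num_covers :: "'a set \<Rightarrow> 'a set set \<Rightarrow> nat \<Rightarrow> nat" where
  "num_covers V E k = card {S. card S = k \<and> vertex_cover V E S}"

definition K3_plus_isolated :: "'a set \<Rightarrow> 'a set set \<Rightarrow> bool" where
  "K3_plus_isolated V E \<longleftrightarrow> (\<exists>a b c. a \<in> V \<and> b \<in> V \<and> c \<in> V \<and> distinct [a, b, c] \<and>
      E = {{a, b}, {b, c}, {a, c}})"

definition P4_plus_isolated :: "'a set \<Rightarrow> 'a set set \<Rightarrow> bool" where
  "P4_plus_isolated V E \<longleftrightarrow> (\<exists>a b c d. a \<in> V \<and> b \<in> V \<and> c \<in> V \<and> d \<in> V \<and> distinct [a, b, c, d] \<and>
      E = {{a, b}, {b, c}, {c, d}})"

end

theory Submission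
  imports Defs
begin

lemma cs2:
  assumes "finite W" "X \<subseteq> W" "card X = 2"
  shows "card {S. S \<subseteq> W \<and> card S = 3 \<and> X \<subseteq> S} = card W - 2"
proof -
  have fX: "finite X" using assms finite_subset by blast
  have eq: "{S. S \<subseteq> W \<and> card S = 3 \<and> X \<subseteq> S} = (\<lambda>x. insert x X) ` (W - X)"
  proof
    show "{S. S \<subseteq> W \<and> card S = 3 \<and> X \<subseteq> S} \<subseteq> (\<lambda>x. insert x X) ` (W - X)"
    proof
      fix S assume S: "S \<in> {S. S \<subseteq> W \<and> card S = 3 \<and> X \<subseteq> S}"
      hence fS: "finite S" using assms finite_subset by blast
      have "card (S - X) = 1" using S fX by (simp add: card_Diff_subset assms)
      then obtain x where x: "S - X = {x}" by (auto simp: card_1_singleton_iff)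
      hence "S = insert x X" using S by blast
      moreover have "x \<in> W - X" using x S by blast
      ultimately show "S \<in> (\<lambda>x. insert x X) ` (W - X)" by blast
    qed
    show "(\<lambda>x. insert x X) ` (W - X) \<subseteq> {S. S \<subseteq> W \<and> card S = 3 \<and> X \<subseteq> S}"
      using assms fX by auto
  qed
  have inj: "inj_on (\<lambda>x. insert x X) (W - X)"
    by (rule inj_onI) (metis Diff_iff insertE insertI1)
  show ?thesis unfolding eq using card_image[OF inj] assms
    by (simp add: card_Diff_subset fX)
qed

lemma cs3:
  assumes "finite W" "X \<subseteq> W" "card X = 3"
  shows "card {S. S \<subseteq> W \<and> card S = 3 \<and> X \<subseteq> S} = 1"
proof -
  have "{S. S \<subseteq> W \<and> card S = 3 \<and> X \<subseteq> S} = {X}"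
  proof
    show "{S. S \<subseteq> W \<and> card S = 3 \<and> X \<subseteq> S} \<subseteq> {X}"
      using assms by clarsimp (metis card_subset_eq finite_subset)
  qed (use assms in auto)
  thus ?thesis by simp
qed

lemma cs4:
  assumes "finite W" "X \<subseteq> W" "card X \<ge> 4"
  shows "card {S. S \<subseteq> W \<and> card S = 3 \<and> X \<subseteq> S} = 0"
proof -
  have EE: "{S. S \<subseteq> W \<and> card S = 3 \<and> X \<subseteq> S} = {}"
  proof (rule ccontr)
    assume "\<not> ?thesis"
    then obtain S where S: "S \<subseteq> W" "card S = 3" "X \<subseteq> S" by blast
    have "finite S" using S(2) by (metis card.infinite zero_neq_numeral)
    hence "card X \<le> card S" using S card_mono by blast
    thus False using S assms by simp
  qed
  show ?thesis unfolding EE by simp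
qed

lemma few_covers:
  assumes sg: "simple_graph V E"
    and no1: "\<not> (\<exists>S. card S = 1 \<and> vertex_cover V E S)"
    and no2: "\<not> (\<exists>S. card S = 2 \<and> vertex_cover V E S)"
    and ne: "E \<noteq> {}"
  shows "num_covers V E 3 \<le> 8"
proof -
  obtain e1 where e1: "e1 \<in> E" using ne by blast
  have edge: "\<And>e. e \<in> E \<Longrightarrow> e \<subseteq> V \<and> card e = 2" using sg by (simp add: simple_graph_def)
  have fe: "\<And>e. e \<in> E \<Longrightarrow> finite e" using edge by (metis card.infinite zero_neq_numeral)
  define e2 where "e2 x = (SOME e. e \<in> E \<and> x \<notin> e)" for x
  define e3 where "e3 x y = (SOME e. e \<in> E \<and> x \<notin> e \<and> y \<notin> e)" for x y
  have e2: "e2 x \<in> E \<and> x \<notin> e2 x" if xV0: "x \<in> V" for x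
  proof -
    have "\<not> vertex_cover V E {x}" using no1 by (metis card.empty card_insert_disjoint empty_iff finite.emptyI One_nat_def)
    then obtain e where "e \<in> E" "x \<notin> e" using xV0 unfolding vertex_cover_def by auto
    hence "\<exists>e. e \<in> E \<and> x \<notin> e" by blast
    thus ?thesis unfolding e2_def by (rule someI_ex)
  qed
  have e3: "e3 x y \<in> E \<and> x \<notin> e3 x y \<and> y \<notin> e3 x y" if xy0: "x \<in> V" "y \<in> V" "x \<noteq> y" for x y
  proof -
    have "\<not> vertex_cover V E {x,y}" using no2 xy0 by (metis card_2_iff)
    then obtain e where "e \<in> E" "x \<notin> e" "y \<notin> e" using xy0 unfolding vertex_cover_def by auto
    hence "\<exists>e. e \<in> E \<and> x \<notin> e \<and> y \<notin> e" by blast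
    thus ?thesis unfolding e3_def by (rule someI_ex)
  qed
  define U where "U = (\<Union>x\<in>e1. \<Union>y\<in>e2 x. (\<lambda>z. {x,y,z}) ` e3 x y)"
  have sub: "{S. card S = 3 \<and> vertex_cover V E S} \<subseteq> U"
  proof
    fix S assume "S \<in> {S. card S = 3 \<and> vertex_cover V E S}"
    hence S: "card S = 3" "S \<subseteq> V" "\<forall>e\<in>E. S \<inter> e \<noteq> {}" unfolding vertex_cover_def by auto
    obtain x where x: "x \<in> S" "x \<in> e1" using S(3) e1 by blast
    have xV: "x \<in> V" using x S by blast
    obtain y where y: "y \<in> S" "y \<in> e2 x" using S(3) e2[OF xV] by blast
    have yV: "y \<in> V" "y \<noteq> x" using y S e2[OF xV] by auto
    obtain z where z: "z \<in> S" "z \<in> e3 x y" using S(3) e3[OF xV yV(1) yV(2)[symmetric]] by blast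
    have zz: "z \<noteq> x" "z \<noteq> y" using z e3[OF xV yV(1) yV(2)[symmetric]] by auto
    have "{x,y,z} \<subseteq> S" using x y z by auto
    moreover have "card {x,y,z} = 3" using yV zz by auto
    moreover have "finite S" using S(1) by (metis card.infinite zero_neq_numeral)
    ultimately have "S = {x,y,z}" using S(1) by (metis card_subset_eq)
    thus "S \<in> U" unfolding U_def using x y z by blast
  qed
  have cardU: "card U \<le> 8"
  proof -
    have "card U \<le> (\<Sum>x\<in>e1. card (\<Union>y\<in>e2 x. (\<lambda>z. {x,y,z}) ` e3 x y))"
      unfolding U_def by (rule card_UN_le) (simp add: fe e1)
    also have "\<dots> \<le> (\<Sum>x\<in>e1. 4)"
    proof (rule sum_mono)
      fix x assume "x \<in> e1"
      hence xV: "x \<in> V" using edge e1 by blast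
      have "card (\<Union>y\<in>e2 x. (\<lambda>z. {x,y,z}) ` e3 x y) \<le> (\<Sum>y\<in>e2 x. card ((\<lambda>z. {x,y,z}) ` e3 x y))"
        by (rule card_UN_le) (simp add: fe e2[OF xV])
      also have "\<dots> \<le> (\<Sum>y\<in>e2 x. 2)"
      proof (rule sum_mono)
        fix y assume "y \<in> e2 x"
        hence "y \<in> V" "x \<noteq> y" using edge e2[OF xV] by auto
        hence "card (e3 x y) = 2" using e3[of x y] xV edge by auto
        thus "card ((\<lambda>z. {x,y,z}) ` e3 x y) \<le> 2" by (metis card_image_le fe e3 \<open>y \<in> V\<close> \<open>x \<noteq> y\<close> xV)
      qed
      also have "\<dots> = 4" using edge e2[OF xV] by simp
      finally show "card (\<Union>y\<in>e2 x. (\<lambda>z. {x,y,z}) ` e3 x y) \<le> 4" .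
    qed
    also have "\<dots> = 8" using edge e1 by simp
    finally show ?thesis .
  qed
  have "finite U" unfolding U_def
  proof (intro finite_UN_I)
    show "finite e1" using fe e1 by blast
    fix x assume x: "x \<in> e1"
    hence xV: "x \<in> V" using edge e1 by blast
    show "finite (e2 x)" using fe e2[OF xV] by blast
    fix y assume "y \<in> e2 x"
    hence "y \<in> V" "x \<noteq> y" using edge e2[OF xV] by auto
    thus "finite ((\<lambda>z. {x,y,z}) ` e3 x y)" using fe e3 xV by blast
  qed
  hence "card {S. card S = 3 \<and> vertex_cover V E S} \<le> card U" using sub card_mono by blast
  thus ?thesis unfolding num_covers_def using cardU by linarith
qed


lemma csall:
  assumes "finite W" "X \<subseteq> W" "card X \<ge> 2"
  shows "card {S. S \<subseteq> W \<and> card S = 3 \<and> X \<subseteq> S} =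
     (if card X = 2 then card W - 2 else if card X = 3 then 1 else 0)"
  using cs2[OF assms(1,2)] cs3[OF assms(1,2)] cs4[OF assms(1,2)] assms(3) by auto

lemma arith_cases:
  fixes n c p2 p3 p4 a b k :: nat and e :: bool
  assumes "2*n \<le> c + 2" "c + 12 < 4*n" "n \<ge> 6" "c = (n-2) + p2 + p3 + p4"
  "p2 = (if b+1=2 then n-3 else if b+1=3 then 1 else 0)"
  "p3 = (if a+1=2 then n-3 else if a+1=3 then 1 else 0)"
  "p4 = (if e then 0 else if k=2 then n-4 else if k=3 then 1 else 0)"
  "a\<ge>1" "b\<ge>1" "a \<le> k" "b \<le> k" "\<not>e \<Longrightarrow> k \<ge> 2" "k \<le> a + b"
 shows "(e \<and> a=1 \<and> b=1) \<or> (\<not>e \<and> k=2 \<and> (a=1\<and>b=2 \<or> a=2\<and>b=1))"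
  using assms by (auto split: if_splits)

lemma two_cover_case:
  assumes sg: "simple_graph V E" and uV: "u \<in> V" and vV: "v \<in> V" and uv: "u \<noteq> v"
    and cov: "\<forall>e\<in>E. u \<in> e \<or> v \<in> e"
    and no1: "\<not> (\<exists>S. card S = 1 \<and> vertex_cover V E S)"
    and lo: "2 * card V \<le> num_covers V E 3 + 2"
    and hi: "num_covers V E 3 + 12 < 4 * card V"
    and n6: "card V \<ge> 6"
  shows "K3_plus_isolated V E \<or> P4_plus_isolated V E"
proof -
  have fV: "finite V" using sg by (simp add: simple_graph_def)
  have edge: "\<And>e. e \<in> E \<Longrightarrow> e \<subseteq> V \<and> card e = 2" using sg by (simp add: simple_graph_def)
  have other: "\<exists>y. y \<noteq> w \<and> e = {w, y}" if ew: "e \<in> E" "w \<in> e" for e w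
  proof -
    obtain p q where "e = {p, q}" "p \<noteq> q" using edge[OF ew(1)] by (metis card_2_iff)
    thus ?thesis using ew(2) by auto
  qed
  have noloop: "{w} \<notin> E" for w using edge by fastforce
  define A where "A = {x. {u, x} \<in> E} - {v}"
  define B where "B = {y. {v, y} \<in> E} - {u}"
  have Asub: "A \<subseteq> V - {u, v}"
  proof
    fix x assume "x \<in> A"
    hence "{u, x} \<in> E" "x \<noteq> v" unfolding A_def by auto
    moreover have "x \<noteq> u" using \<open>{u, x} \<in> E\<close> noloop by force
    ultimately show "x \<in> V - {u, v}" using edge by blast
  qed
  have Bsub: "B \<subseteq> V - {u, v}"
  proof
    fix x assume "x \<in> B"
    hence "{v, x} \<in> E" "x \<noteq> u" unfolding B_def by auto
    moreover have "x \<noteq> v" using \<open>{v, x} \<in> E\<close> noloop by force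
    ultimately show "x \<in> V - {u, v}" using edge by blast
  qed
  have fA: "finite A" and fB: "finite B" using Asub Bsub fV finite_subset by blast+
  have edgeform: "e = {u, v} \<or> (\<exists>x\<in>A. e = {u, x}) \<or> (\<exists>y\<in>B. e = {v, y})" if eE: "e \<in> E" for e
  proof (cases "u \<in> e")
    case True
    then obtain y where y: "y \<noteq> u" "e = {u, y}" using other eE by blast
    show ?thesis
    proof (cases "y = v")
      case False
      hence "y \<in> A" unfolding A_def using y eE by auto
      thus ?thesis using y by blast
    qed (use y in blast)
  next
    case False
    hence "v \<in> e" using cov eE by blast
    then obtain y where y: "y \<noteq> v" "e = {v, y}" using other eE by blast
    hence "y \<in> B" unfolding B_def using y eE False by auto
    thus ?thesis using y by blast
  qed
  have edgeE: "P" if "e \<in> E" "e = {u, v} \<Longrightarrow> P" "\<And>x. x \<in> A \<Longrightarrow> e = {u, x} \<Longrightarrow> P"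
     "\<And>y. y \<in> B \<Longrightarrow> e = {v, y} \<Longrightarrow> P" for e P
    using edgeform[OF that(1)] that(2-4) by blast
  have coverI: "vertex_cover V E S" if "S \<subseteq> V" "\<And>e. e \<in> E \<Longrightarrow> \<exists>x\<in>S. x \<in> e" for S
    unfolding vertex_cover_def using that by blast
  have coverD: "\<exists>x\<in>S. x \<in> e" if "vertex_cover V E S" "e \<in> E" for S e
    using that unfolding vertex_cover_def by blast
  have single_not: "\<not> vertex_cover V E {w}" for w
    using no1 by (metis card.empty card_insert_disjoint empty_iff finite.emptyI One_nat_def)
  have Ane: "A \<noteq> {}"
  proof
    assume "A = {}"
    have "vertex_cover V E {v}"
    proof (rule coverI)
      fix e assume "e \<in> E"
      thus "\<exists>x\<in>{v}. x \<in> e" by (rule edgeE) (use \<open>A = {}\<close> in auto)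
    qed (use vV in auto)
    thus False using single_not by blast
  qed
  have Bne: "B \<noteq> {}"
  proof
    assume "B = {}"
    have "vertex_cover V E {u}"
    proof (rule coverI)
      fix e assume "e \<in> E"
      thus "\<exists>x\<in>{u}. x \<in> e" by (rule edgeE) (use \<open>B = {}\<close> in auto)
    qed (use uV in auto)
    thus False using single_not by blast
  qed
  have uvcov: "vertex_cover V E {u, v}" unfolding vertex_cover_def using uV vV cov by blast
  define C where "C = {S. card S = 3 \<and> vertex_cover V E S}"
  define P1 where "P1 = {S\<in>C. u \<in> S \<and> v \<in> S}"
  define P2 where "P2 = {S\<in>C. u \<in> S \<and> v \<notin> S}"
  define P3 where "P3 = {S\<in>C. u \<notin> S \<and> v \<in> S}"
  define P4 where "P4 = {S\<in>C. u \<notin> S \<and> v \<notin> S}"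
  have fC: "finite C"
  proof -
    have "C \<subseteq> Pow V" unfolding C_def vertex_cover_def by blast
    thus ?thesis using fV finite_subset by blast
  qed
  have Cdec: "C = P1 \<union> P2 \<union> P3 \<union> P4" unfolding P1_def P2_def P3_def P4_def by blast
  have cardC: "card C = card P1 + card P2 + card P3 + card P4"
  proof -
    have f: "finite P1" "finite P2" "finite P3" "finite P4"
      using fC unfolding P1_def P2_def P3_def P4_def by auto
    have "card (P1 \<union> P2 \<union> P3 \<union> P4) = card (P1 \<union> P2 \<union> P3) + card P4"
      by (rule card_Un_disjoint) (use f in \<open>auto simp: P1_def P2_def P3_def P4_def\<close>)
    also have "card (P1 \<union> P2 \<union> P3) = card (P1 \<union> P2) + card P3"
      by (rule card_Un_disjoint) (use f in \<open>auto simp: P1_def P2_def P3_def P4_def\<close>)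
    also have "card (P1 \<union> P2) = card P1 + card P2"
      by (rule card_Un_disjoint) (use f in \<open>auto simp: P1_def P2_def P3_def P4_def\<close>)
    finally show ?thesis using Cdec by simp
  qed
  have c_eq: "num_covers V E 3 = card C" unfolding num_covers_def C_def by simp
  have P1eq: "P1 = {S. S \<subseteq> V \<and> card S = 3 \<and> {u, v} \<subseteq> S}"
  proof
    show "P1 \<subseteq> {S. S \<subseteq> V \<and> card S = 3 \<and> {u, v} \<subseteq> S}"
      unfolding P1_def C_def vertex_cover_def by blast
    show "{S. S \<subseteq> V \<and> card S = 3 \<and> {u, v} \<subseteq> S} \<subseteq> P1"
    proof
      fix S assume S: "S \<in> {S. S \<subseteq> V \<and> card S = 3 \<and> {u, v} \<subseteq> S}"
      have "vertex_cover V E S"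
        by (rule coverI) (use S cov in auto)
      thus "S \<in> P1" using S unfolding P1_def C_def by blast
    qed
  qed
  have p1: "card P1 = card V - 2"
    unfolding P1eq by (rule cs2) (use fV uV vV uv in auto)
  have P2eq: "P2 = {S. S \<subseteq> V - {v} \<and> card S = 3 \<and> insert u B \<subseteq> S}"
  proof
    show "P2 \<subseteq> {S. S \<subseteq> V - {v} \<and> card S = 3 \<and> insert u B \<subseteq> S}"
    proof
      fix S assume "S \<in> P2"
      hence S: "card S = 3" "S \<subseteq> V" "\<forall>e\<in>E. S \<inter> e \<noteq> {}" "u \<in> S" "v \<notin> S"
        unfolding P2_def C_def vertex_cover_def by auto
      have "B \<subseteq> S"
      proof
        fix y assume "y \<in> B"
        hence "{v, y} \<in> E" unfolding B_def by auto
        hence "S \<inter> {v, y} \<noteq> {}" using S(3) by blast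
        thus "y \<in> S" using S(5) by blast
      qed
      thus "S \<in> {S. S \<subseteq> V - {v} \<and> card S = 3 \<and> insert u B \<subseteq> S}" using S by blast
    qed
    show "{S. S \<subseteq> V - {v} \<and> card S = 3 \<and> insert u B \<subseteq> S} \<subseteq> P2"
    proof
      fix S assume S: "S \<in> {S. S \<subseteq> V - {v} \<and> card S = 3 \<and> insert u B \<subseteq> S}"
      have "\<forall>e\<in>E. S \<inter> e \<noteq> {}"
      proof
        fix e assume "e \<in> E"
        thus "S \<inter> e \<noteq> {}" by (rule edgeE) (use S in auto)
      qed
      thus "S \<in> P2" using S unfolding P2_def C_def vertex_cover_def by blast
    qed
  qed
  have P3eq: "P3 = {S. S \<subseteq> V - {u} \<and> card S = 3 \<and> insert v A \<subseteq> S}"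
  proof
    show "P3 \<subseteq> {S. S \<subseteq> V - {u} \<and> card S = 3 \<and> insert v A \<subseteq> S}"
    proof
      fix S assume "S \<in> P3"
      hence S: "card S = 3" "S \<subseteq> V" "\<forall>e\<in>E. S \<inter> e \<noteq> {}" "v \<in> S" "u \<notin> S"
        unfolding P3_def C_def vertex_cover_def by auto
      have "A \<subseteq> S"
      proof
        fix y assume "y \<in> A"
        hence "{u, y} \<in> E" unfolding A_def by auto
        hence "S \<inter> {u, y} \<noteq> {}" using S(3) by blast
        thus "y \<in> S" using S(5) by blast
      qed
      thus "S \<in> {S. S \<subseteq> V - {u} \<and> card S = 3 \<and> insert v A \<subseteq> S}" using S by blast
    qed
    show "{S. S \<subseteq> V - {u} \<and> card S = 3 \<and> insert v A \<subseteq> S} \<subseteq> P3"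
    proof
      fix S assume S: "S \<in> {S. S \<subseteq> V - {u} \<and> card S = 3 \<and> insert v A \<subseteq> S}"
      have "\<forall>e\<in>E. S \<inter> e \<noteq> {}"
      proof
        fix e assume "e \<in> E"
        thus "S \<inter> e \<noteq> {}" by (rule edgeE) (use S in auto)
      qed
      thus "S \<in> P3" using S uv unfolding P3_def C_def vertex_cover_def by blast
    qed
  qed
  have P4e: "P4 = {}" if uvE: "{u, v} \<in> E"
  proof -
    { fix S assume "S \<in> P4"
      hence "vertex_cover V E S" "u \<notin> S" "v \<notin> S" unfolding P4_def C_def by auto
      hence False using coverD[OF _ uvE] by blast }
    thus ?thesis by blast
  qed
  have P4eq: "P4 = {S. S \<subseteq> V - {u, v} \<and> card S = 3 \<and> A \<union> B \<subseteq> S}" if ne: "{u, v} \<notin> E"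
  proof
    show "P4 \<subseteq> {S. S \<subseteq> V - {u, v} \<and> card S = 3 \<and> A \<union> B \<subseteq> S}"
    proof
      fix S assume "S \<in> P4"
      hence S: "card S = 3" "S \<subseteq> V" "\<forall>e\<in>E. S \<inter> e \<noteq> {}" "v \<notin> S" "u \<notin> S"
        unfolding P4_def C_def vertex_cover_def by auto
      have "A \<subseteq> S"
      proof
        fix y assume "y \<in> A"
        hence "{u, y} \<in> E" unfolding A_def by auto
        hence "S \<inter> {u, y} \<noteq> {}" using S(3) by blast
        thus "y \<in> S" using S(5) by blast
      qed
      moreover have "B \<subseteq> S"
      proof
        fix y assume "y \<in> B"
        hence "{v, y} \<in> E" unfolding B_def by auto
        hence "S \<inter> {v, y} \<noteq> {}" using S(3) by blast
        thus "y \<in> S" using S(4) by blast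
      qed
      ultimately show "S \<in> {S. S \<subseteq> V - {u, v} \<and> card S = 3 \<and> A \<union> B \<subseteq> S}" using S by blast
    qed
    show "{S. S \<subseteq> V - {u, v} \<and> card S = 3 \<and> A \<union> B \<subseteq> S} \<subseteq> P4"
    proof
      fix S assume S: "S \<in> {S. S \<subseteq> V - {u, v} \<and> card S = 3 \<and> A \<union> B \<subseteq> S}"
      have "\<forall>e\<in>E. S \<inter> e \<noteq> {}"
      proof
        fix e assume "e \<in> E"
        thus "S \<inter> e \<noteq> {}" by (rule edgeE) (use S ne \<open>e \<in> E\<close> in auto)
      qed
      thus "S \<in> P4" using S uv unfolding P4_def C_def vertex_cover_def by blast
    qed
  qed
  define a where "a = card A"
  define b where "b = card B"
  define k where "k = card (A \<union> B)"
  have a1: "a \<ge> 1" using Ane fA a_def by (simp add: Suc_leI card_gt_0_iff)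
  have b1: "b \<ge> 1" using Bne fB b_def by (simp add: Suc_leI card_gt_0_iff)
  have ka: "a \<le> k" "b \<le> k" unfolding a_def b_def k_def using fA fB by (auto intro: card_mono)
  have cuB: "card (insert u B) = b + 1"
  proof -
    have "u \<notin> B" using Bsub by blast
    thus ?thesis using fB b_def by simp
  qed
  have cvA: "card (insert v A) = a + 1"
  proof -
    have "v \<notin> A" using Asub by blast
    thus ?thesis using fA a_def by simp
  qed
  have p2: "card P2 = (if b + 1 = 2 then card V - 3 else if b + 1 = 3 then 1 else 0)"
  proof -
    have X: "insert u B \<subseteq> V - {v}" using Bsub uV uv by blast
    have cW: "card (V - {v}) = card V - 1" using vV fV by simp
    have c: "card {S. S \<subseteq> V - {v} \<and> card S = 3 \<and> insert u B \<subseteq> S} = (if card (insert u B) = 2 then card (V - {v}) - 2 else if card (insert u B) = 3 then 1 else 0)"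
      by (rule csall) (use fV X cuB b1 in auto)
    show ?thesis unfolding P2eq c cuB cW by (simp add: numeral_eq_Suc)
  qed
  have p3: "card P3 = (if a + 1 = 2 then card V - 3 else if a + 1 = 3 then 1 else 0)"
  proof -
    have X: "insert v A \<subseteq> V - {u}" using Asub vV uv by blast
    have cW: "card (V - {u}) = card V - 1" using uV fV by simp
    have c: "card {S. S \<subseteq> V - {u} \<and> card S = 3 \<and> insert v A \<subseteq> S} = (if card (insert v A) = 2 then card (V - {u}) - 2 else if card (insert v A) = 3 then 1 else 0)"
      by (rule csall) (use fV X cvA a1 in auto)
    show ?thesis unfolding P3eq c cvA cW by (simp add: numeral_eq_Suc)
  qed
  have k2: "k \<ge> 2" if ne: "{u, v} \<notin> E"
  proof (rule ccontr)
    assume "\<not> k \<ge> 2"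
    hence "k = 1" using a1 ka by linarith
    then obtain w where w: "A \<union> B = {w}" unfolding k_def by (auto simp: card_1_singleton_iff)
    have "A = {w}" using w Ane by (metis Un_upper1 subset_singletonD)
    have "B = {w}" using w Bne by (metis Un_upper2 subset_singletonD)
    have "vertex_cover V E {w}"
    proof (rule coverI)
      fix e assume "e \<in> E"
      thus "\<exists>x\<in>{w}. x \<in> e" by (rule edgeE) (use \<open>A = {w}\<close> \<open>B = {w}\<close> ne \<open>e \<in> E\<close> in auto)
    qed (use Asub \<open>A = {w}\<close> in auto)
    thus False using single_not by blast
  qed
  have p4: "card P4 = (if {u, v} \<in> E then 0 else if k = 2 then card V - 4 else if k = 3 then 1 else 0)"
  proof (cases "{u, v} \<in> E")
    case True thus ?thesis using P4e by simp
  next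
    case False
    have "card (V - {u, v}) = card V - 2" using fV uV vV uv by (simp add: card_Diff_subset)
    have X: "A \<union> B \<subseteq> V - {u, v}" using Asub Bsub by blast
    have c: "card {S. S \<subseteq> V - {u, v} \<and> card S = 3 \<and> A \<union> B \<subseteq> S} = (if card (A \<union> B) = 2 then card (V - {u, v}) - 2 else if card (A \<union> B) = 3 then 1 else 0)"
      by (rule csall) (use fV X k2[OF False] k_def in auto)
    show ?thesis unfolding P4eq[OF False] c k_def[symmetric] \<open>card (V - {u, v}) = card V - 2\<close> using False
      by (simp add: numeral_eq_Suc)
  qed
  have cases: "({u, v} \<in> E \<and> a = 1 \<and> b = 1) \<or> ({u, v} \<notin> E \<and> k = 2 \<and> ((a = 1 \<and> b = 2) \<or> (a = 2 \<and> b = 1)))"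
  proof -
    have kab: "k \<le> a + b" unfolding k_def a_def b_def by (rule card_Un_le)
    have ceq: "num_covers V E 3 = (card V - 2) + card P2 + card P3 + card P4" using c_eq cardC p1 by simp
    show ?thesis using arith_cases[OF lo hi n6 ceq p2 p3 p4 a1 b1 ka(1) ka(2) k2 kab] by blast
  qed
  have AE: "{u, x} \<in> E" if "x \<in> A" for x using that unfolding A_def by blast
  have BE: "{v, x} \<in> E" if "x \<in> B" for x using that unfolding B_def by blast
  show ?thesis
  proof (cases "{u, v} \<in> E")
    case True
    hence ab: "a = 1" "b = 1" using cases by auto
    obtain a0 where a0: "A = {a0}" using ab a_def by (auto simp: card_1_singleton_iff)
    obtain b0 where b0: "B = {b0}" using ab b_def by (auto simp: card_1_singleton_iff)
    have a0V: "a0 \<in> V" "a0 \<noteq> u" "a0 \<noteq> v" using a0 Asub by auto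
    have b0V: "b0 \<in> V" "b0 \<noteq> u" "b0 \<noteq> v" using b0 Bsub by auto
    have Eeq: "E = {{u, v}, {u, a0}, {v, b0}}"
    proof
      show "E \<subseteq> {{u, v}, {u, a0}, {v, b0}}"
      proof
        fix e assume "e \<in> E"
        thus "e \<in> {{u, v}, {u, a0}, {v, b0}}" by (rule edgeE) (use a0 b0 in auto)
      qed
      show "{{u, v}, {u, a0}, {v, b0}} \<subseteq> E" using True AE BE a0 b0 by auto
    qed
    show ?thesis
    proof (cases "a0 = b0")
      case True
      have "E = {{u, v}, {v, a0}, {u, a0}}" using Eeq True by blast
      hence "K3_plus_isolated V E" unfolding K3_plus_isolated_def
        using uV vV uv a0V by (intro exI[of _ u] exI[of _ v] exI[of _ a0]) auto
      thus ?thesis by blast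
    next
      case False
      have "E = {{a0, u}, {u, v}, {v, b0}}" using Eeq by (auto simp: insert_commute)
      hence "P4_plus_isolated V E" unfolding P4_plus_isolated_def
        using uV vV uv a0V b0V False by (intro exI[of _ a0] exI[of _ u] exI[of _ v] exI[of _ b0]) auto
      thus ?thesis by blast
    qed
  next
    case False
    hence kk: "k = 2" and ab: "(a = 1 \<and> b = 2) \<or> (a = 2 \<and> b = 1)" using cases by auto
    have edgeE2: "P" if "e \<in> E" "\<And>x. x \<in> A \<Longrightarrow> e = {u, x} \<Longrightarrow> P"
     "\<And>y. y \<in> B \<Longrightarrow> e = {v, y} \<Longrightarrow> P" for e P
      using edgeform[OF that(1)] that(2-3) False that(1) by blast
    show ?thesis
    proof (cases "a = 1")
      case True
      hence b2: "b = 2" using ab by auto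
      obtain a0 where a0: "A = {a0}" using True a_def by (auto simp: card_1_singleton_iff)
      have "A \<union> B = B" using kk b2 k_def b_def fA fB
        by (metis Un_upper2 card_subset_eq finite_UnI)
      hence a0B: "a0 \<in> B" using a0 by blast
      have "card (B - {a0}) = 1" using a0B b2 b_def fB by simp
      then obtain b0 where b0': "B - {a0} = {b0}" by (auto simp: card_1_singleton_iff)
      hence b0: "B = {a0, b0}" "b0 \<noteq> a0" using a0B by auto
      have a0V: "a0 \<in> V" "a0 \<noteq> u" "a0 \<noteq> v" using a0 Asub by auto
      have b0V: "b0 \<in> V" "b0 \<noteq> u" "b0 \<noteq> v" using b0 Bsub by auto
      have Eeq: "E = {{u, a0}, {v, a0}, {v, b0}}"
      proof
        show "E \<subseteq> {{u, a0}, {v, a0}, {v, b0}}"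
        proof
          fix e assume "e \<in> E"
          thus "e \<in> {{u, a0}, {v, a0}, {v, b0}}" by (rule edgeE2) (use a0 b0 in auto)
        qed
        show "{{u, a0}, {v, a0}, {v, b0}} \<subseteq> E" using AE BE a0 b0 by auto
      qed
      have "E = {{u, a0}, {a0, v}, {v, b0}}" using Eeq by (auto simp: insert_commute)
      hence "P4_plus_isolated V E" unfolding P4_plus_isolated_def
        using uV vV uv a0V b0V b0(2) by (intro exI[of _ u] exI[of _ a0] exI[of _ v] exI[of _ b0]) auto
      thus ?thesis by blast
    next
      case False
      hence a2: "a = 2" and b1': "b = 1" using ab by auto
      obtain b0 where b0: "B = {b0}" using b1' b_def by (auto simp: card_1_singleton_iff)
      have "A \<union> B = A" using kk a2 k_def a_def fA fB
        by (metis Un_upper1 card_subset_eq finite_UnI)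
      hence b0A: "b0 \<in> A" using b0 by blast
      have "card (A - {b0}) = 1" using b0A a2 a_def fA by simp
      then obtain a0 where a0': "A - {b0} = {a0}" by (auto simp: card_1_singleton_iff)
      hence a0: "A = {b0, a0}" "a0 \<noteq> b0" using b0A by auto
      have a0V: "a0 \<in> V" "a0 \<noteq> u" "a0 \<noteq> v" using a0 Asub by auto
      have b0V: "b0 \<in> V" "b0 \<noteq> u" "b0 \<noteq> v" using b0 Bsub by auto
      have Eeq: "E = {{u, b0}, {u, a0}, {v, b0}}"
      proof
        show "E \<subseteq> {{u, b0}, {u, a0}, {v, b0}}"
        proof
          fix e assume "e \<in> E"
          thus "e \<in> {{u, b0}, {u, a0}, {v, b0}}" by (rule edgeE2) (use a0 b0 in auto)
        qed
        show "{{u, b0}, {u, a0}, {v, b0}} \<subseteq> E" using AE BE a0 b0 by auto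
      qed
      have "E = {{v, b0}, {b0, u}, {u, a0}}" using Eeq by (auto simp: insert_commute)
      hence "P4_plus_isolated V E" unfolding P4_plus_isolated_def
        using uV vV uv a0V b0V a0(2) by (intro exI[of _ v] exI[of _ b0] exI[of _ u] exI[of _ a0]) auto
      thus ?thesis by blast
    qed
  qed
qed


theorem mainTheorem12:
  fixes V :: "'a set" and E :: "'a set set" and r :: nat
  assumes "r \<ge> 5"
    and "simple_graph V E"
    and "card V = r + 1"
    and "\<not> (\<exists>S. card S = 1 \<and> vertex_cover V E S)"
    and "4 * real r - 16 + 36 / (real r + 2) \<le> real (num_covers V E 3)"
    and "real (num_covers V E 3) < 4 * real r - 8"
  shows "K3_plus_isolated V E \<or> P4_plus_isolated V E"
proof -
  note r5 = assms(1) and sg = assms(2) and cV = assms(3) and no1 = assms(4)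
  define c where "c = num_covers V E 3"
  have fV: "finite V" using sg by (simp add: simple_graph_def)
  have n6: "card V \<ge> 6" using cV r5 by simp
  have lo_real: "real c > 2 * real r - 1"
  proof -
    have pos: "real r + 2 > 0" by simp
    have nn: "(real r - 5) * (2 * real r - 1) \<ge> 0" using r5 by simp
    have eq: "(15 - 2 * real r) * (real r + 2) = 35 - (real r - 5) * (2 * real r - 1)"
      by (simp add: algebra_simps)
    have "(15 - 2 * real r) * (real r + 2) < 36" using eq nn by linarith
    hence "15 - 2 * real r < 36 / (real r + 2)" using pos by (simp add: pos_less_divide_eq)
    thus ?thesis using assms(5) unfolding c_def by linarith
  qed
  have lo: "2 * card V \<le> c + 2"
  proof -
    have "real (2 * r) < real (c + 1)" using lo_real by simp
    hence "2 * r < c + 1" by (simp only: of_nat_less_iff)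
    thus ?thesis using cV by simp
  qed
  have hi: "c + 12 < 4 * card V"
  proof -
    have "real (c + 12) < real (4 * (r + 1))" using assms(6) unfolding c_def by simp
    hence "c + 12 < 4 * (r + 1)" by (simp only: of_nat_less_iff)
    thus ?thesis using cV by simp
  qed
  show ?thesis
  proof (cases "\<exists>S. card S = 2 \<and> vertex_cover V E S")
    case True
    then obtain S where S: "card S = 2" "vertex_cover V E S" by blast
    then obtain u v where uv: "S = {u, v}" "u \<noteq> v" by (metis card_2_iff)
    have uvV: "u \<in> V" "v \<in> V" using S(2) uv unfolding vertex_cover_def by auto
    have cov: "\<forall>e\<in>E. u \<in> e \<or> v \<in> e" using S(2) uv unfolding vertex_cover_def by blast
    show ?thesis
      by (rule two_cover_case[OF sg uvV(1) uvV(2) uv(2) cov no1]) (use lo hi n6 c_def in auto)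
  next
    case False
    have ne: "E \<noteq> {}"
    proof
      assume "E = {}"
      have "V \<noteq> {}" using n6 by auto
      then obtain x where "x \<in> V" by blast
      hence "vertex_cover V E {x}" using \<open>E = {}\<close> unfolding vertex_cover_def by simp
      thus False using no1 by (metis card.empty card_insert_disjoint empty_iff finite.emptyI One_nat_def)
    qed
    have "c \<le> 8" unfolding c_def by (rule few_covers[OF sg no1 False ne])
    thus ?thesis using lo n6 by linarith
  qed
qed

end
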